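(* Let $f:[0,1]\to\mathbb{R}$ with $f(0),f(1)\in\mathbb{Z}$ and let $n\in\mathbb{N}_+$. If $n\ge 3$, let also $\tilde\varphi_n:[0,1]\to\mathbb{R}$ satisfy \[ \tilde\varphi_n\left(\frac{k+1}{n}\right)-\tilde\varphi_n\left(\frac{k}{n}\right)\ge \frac12\left(\binom{n}{k}^{-1}+\binom{n}{k+1}^{-1}\right),\quad k=1,\dots,n-2. \] (a) If $f$ is monotone increasing on $[0,1/n]$ and on $[1-1/n,1]$, and (when $n\ge 3$) $f(x)-\tilde\varphi_n(x)$ is monotone increasing on $[1/n,1-1/n]$, then $\widehat{B}_n(f)$ is monotone increasing on $[0,1]$. (b) If $f$ is monotone decreasing on $[0,1/n]$ and on $[1-1/n,1]$, and (when $n\ge3$) $f(x)+\tilde\varphi_n(x)$ is monotone decreasing on $[1/n,1-1/n]$, then $\widehat{B}_n(f)$ is monotone decreasing on $[0,1]$.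
   Context: For $n\in\mathbb{N}_+$ and $f:[0,1]\to\mathbb{R}$, $\widehat{B}_n(f)(x):=\sum_{k=0}^n \left\langle f\left(\frac{k}{n}\right)\binom{n}{k}\right\rangle x^k(1-x)^{n-k}$, where $\langle\alpha\rangle$ is the integer nearest to $\alpha$ (when $\alpha$ is a half-integer, $\langle\alpha\rangle$ may be either neighbouring integer, chosen arbitrarily; the result holds for any such choice). Monotone increasing/decreasing are meant in the non-strict sense. *)

theory Defs
  imports Complex_Main
begin

definition nearest_int_rounding :: "(real \<Rightarrow> int) \<Rightarrow> bool" where
  "nearest_int_rounding r \<longleftrightarrow> (\<forall>\<alpha>. \<bar>real_of_int (r \<alpha>) - \<alpha>\<bar> \<le> 1/2)"

definition Bhat :: "(real \<Rightarrow> int) \<Rightarrow> nat \<Rightarrow> (real \<Rightarrow> real) \<Rightarrow> real \<Rightarrow> real" where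
  "Bhat r n f x = (\<Sum>k=0..n. real_of_int (r (f (real k / real n) * real (n choose k)))
                     * x ^ k * (1 - x) ^ (n - k))"

end

theory Submission
  imports Defs
begin

definition BB :: "nat \<Rightarrow> (nat \<Rightarrow> real) \<Rightarrow> real \<Rightarrow> real" where
  "BB n a x = (\<Sum>k\<le>n. a k * real (n choose k) * x^k * (1-x)^(n-k))"

lemma BB_rec: "BB (Suc n) a x = (1-x) * BB n a x + x * BB n (\<lambda>k. a (Suc k)) x"
proof -
  let ?g = "\<lambda>k. a k * real (n choose k) * x^k * (1-x)^(Suc n-k)"
  have A: "(\<Sum>k\<le>Suc n. ?g k) = (1-x) * BB n a x"
  proof -
    have "(\<Sum>k\<le>Suc n. ?g k) = (\<Sum>k\<le>n. ?g k)" by (simp add: sum.atMost_Suc)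
    also have "\<dots> = (\<Sum>k\<le>n. (1-x) * (a k * real (n choose k) * x^k * (1-x)^(n-k)))"
      by (rule sum.cong) (auto simp: Suc_diff_le)
    finally show ?thesis by (simp add: BB_def sum_distrib_left)
  qed
  have B: "(\<Sum>k\<le>n. a (Suc k) * real (n choose k) * x^(Suc k) * (1-x)^(n-k)) = x * BB n (\<lambda>k. a (Suc k)) x"
    by (simp add: BB_def sum_distrib_left mult_ac)
  have "BB (Suc n) a x = a 0 * (1-x)^(Suc n) + (\<Sum>k\<le>n. a (Suc k) * real (Suc n choose Suc k) * x^(Suc k) * (1-x)^(n-k))"
    unfolding BB_def by (subst sum.atMost_Suc_shift) simp
  also have "\<dots> = a 0 * (1-x)^(Suc n) + (\<Sum>k\<le>n. a (Suc k) * real (n choose Suc k) * x^(Suc k) * (1-x)^(n-k))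
      + (\<Sum>k\<le>n. a (Suc k) * real (n choose k) * x^(Suc k) * (1-x)^(n-k))"
    by (simp add: sum.distrib[symmetric] algebra_simps)
  also have "a 0 * (1-x)^(Suc n) + (\<Sum>k\<le>n. a (Suc k) * real (n choose Suc k) * x^(Suc k) * (1-x)^(n-k)) = (\<Sum>k\<le>Suc n. ?g k)"
    by (subst sum.atMost_Suc_shift) simp
  finally show ?thesis using A B by simp
qed

lemma BB_le: assumes "\<And>k. k \<le> n \<Longrightarrow> a k \<le> b k" "0 \<le> x" "x \<le> 1"
  shows "BB n a x \<le> BB n b x"
  unfolding BB_def using assms by (intro sum_mono mult_right_mono) auto

lemma BB_mono: "(\<And>k. k < n \<Longrightarrow> a k \<le> a (Suc k)) \<Longrightarrow> mono_on {0..1} (BB n a)"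
proof (induction n arbitrary: a)
  case 0
  then show ?case by (simp add: BB_def mono_on_def)
next
  case (Suc n)
  have g: "mono_on {0..1} (BB n a)" using Suc by auto
  have h: "mono_on {0..1} (BB n (\<lambda>k. a (Suc k)))" using Suc by auto
  show ?case
  proof (rule mono_onI)
    fix x y :: real assume xy: "x \<in> {0..1}" "y \<in> {0..1}" "x \<le> y"
    have 1: "BB n a x \<le> BB n a y" using g xy by (auto simp: mono_on_def)
    have 2: "BB n (\<lambda>k. a (Suc k)) x \<le> BB n (\<lambda>k. a (Suc k)) y" using h xy by (auto simp: mono_on_def)
    have 3: "BB n a x \<le> BB n (\<lambda>k. a (Suc k)) x" using xy Suc.prems by (intro BB_le) auto
    have "0 \<le> (1-y) * (BB n a y - BB n a x) + y * (BB n (\<lambda>k. a (Suc k)) y - BB n (\<lambda>k. a (Suc k)) x)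
        + (y - x) * (BB n (\<lambda>k. a (Suc k)) x - BB n a x)"
      using 1 2 3 xy by (intro add_nonneg_nonneg mult_nonneg_nonneg) auto
    then show "BB (Suc n) a x \<le> BB (Suc n) a y" by (simp add: BB_rec algebra_simps)
  qed
qed


lemma round_int: assumes "nearest_int_rounding r" "m \<in> \<int>" shows "real_of_int (r m) = m"
proof -
  obtain z where z: "m = of_int z" using assms(2) Ints_cases by blast
  have "\<bar>real_of_int (r m) - m\<bar> \<le> 1/2" using assms(1) unfolding nearest_int_rounding_def by blast
  then have "\<bar>r m - z\<bar> \<le> 0" using z by linarith
  then show ?thesis using z by simp
qed

lemma round_ge: assumes "nearest_int_rounding r" "of_int m \<le> \<alpha>" shows "of_int m \<le> real_of_int (r \<alpha>)"
proof -
  have "\<bar>real_of_int (r \<alpha>) - \<alpha>\<bar> \<le> 1/2" using assms(1) unfolding nearest_int_rounding_def by blast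
  then have "real_of_int m < real_of_int (r \<alpha>) + 1" using assms(2) by linarith
  then have "m < r \<alpha> + 1" by linarith
  then show ?thesis by simp
qed

lemma round_le: assumes "nearest_int_rounding r" "\<alpha> \<le> of_int m" shows "real_of_int (r \<alpha>) \<le> of_int m"
proof -
  have "\<bar>real_of_int (r \<alpha>) - \<alpha>\<bar> \<le> 1/2" using assms(1) unfolding nearest_int_rounding_def by blast
  then have "real_of_int (r \<alpha>) < real_of_int m + 1" using assms(2) by linarith
  then have "r \<alpha> < m + 1" by linarith
  then show ?thesis by simp
qed

lemma round_abs: assumes "nearest_int_rounding r" shows "\<bar>real_of_int (r \<alpha>) - \<alpha>\<bar> \<le> 1/2"
  using assms unfolding nearest_int_rounding_def by blast


lemma divint: assumes "(n::real) > 0" shows "a / n \<in> {1/n..1 - 1/n} \<longleftrightarrow> 1 \<le> a \<and> a + 1 \<le> n"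
proof -
  have "1/n \<le> a/n \<longleftrightarrow> 1 \<le> a" using assms by (simp add: divide_le_cancel)
  moreover have "1 - 1/n = (n - 1)/n" using assms by (simp add: diff_divide_distrib)
  moreover have "a/n \<le> (n-1)/n \<longleftrightarrow> a \<le> n - 1" using assms by (simp add: divide_le_cancel)
  ultimately show ?thesis by auto
qed

lemma partA:
  fixes f \<phi> :: "real \<Rightarrow> real" and n :: nat and r :: "real \<Rightarrow> int"
  assumes r: "nearest_int_rounding r"
    and f0: "f 0 \<in> \<int>" and f1: "f 1 \<in> \<int>"
    and n: "n \<ge> 1"
    and phi: "n \<ge> 3 \<Longrightarrow> \<forall>k\<in>{1..n-2}.
       \<phi> (real (k+1) / real n) - \<phi> (real k / real n)
         \<ge> 1/2 * (1 / real (n choose k) + 1 / real (n choose (k+1)))"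
    and m1: "mono_on {0..1/real n} f" and m2: "mono_on {1 - 1/real n..1} f"
    and m3: "n \<ge> 3 \<Longrightarrow> mono_on {1/real n..1 - 1/real n} (\<lambda>x. f x - \<phi> x)"
  shows "mono_on {0..1} (Bhat r n f)"
proof -
  define c where "c k = real_of_int (r (f (real k / real n) * real (n choose k)))" for k
  define a where "a k = c k / real (n choose k)" for k
  have eq: "Bhat r n f = BB n a"
  proof
    fix x
    show "Bhat r n f x = BB n a x"
      unfolding Bhat_def BB_def atLeast0AtMost
      by (rule sum.cong) (auto simp: a_def c_def)
  qed
  have npos: "real n > 0" using n by simp
  obtain z0 where z0: "f 0 = of_int z0" using f0 Ints_cases by blast
  obtain z1 where z1: "f 1 = of_int z1" using f1 Ints_cases by blast
  have a0: "a 0 = f 0" unfolding a_def c_def using round_int[OF r f0] by simp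
  have an: "a n = f 1" unfolding a_def c_def using round_int[OF r f1] npos by simp
  have bnd: "\<bar>a k - f (real k / real n)\<bar> \<le> 1/2 * (1 / real (n choose k))" if "k \<le> n" for k
  proof -
    have C: "real (n choose k) > 0" using that by simp
    have "\<bar>c k - f (real k / real n) * real (n choose k)\<bar> \<le> 1/2" unfolding c_def by (rule round_abs[OF r])
    note h = this
    define C' where "C' = real (n choose k)"
    have "a k - f (real k / real n) = (c k - f (real k / real n) * C') / C'"
      using C unfolding C'_def a_def by (simp add: diff_divide_distrib)
    then have "\<bar>a k - f (real k / real n)\<bar> = \<bar>c k - f (real k / real n) * C'\<bar> / C'"
      using C unfolding C'_def by simp
    also have "\<dots> \<le> (1/2) / C'" using h C unfolding C'_def by (intro divide_right_mono) auto
    finally show ?thesis unfolding C'_def by simp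
  qed
  have step: "a k \<le> a (Suc k)" if k: "k < n" for k
  proof (cases "k = 0")
    case True
    have "f 0 \<le> f (1 / real n)" using m1 npos by (auto simp: mono_on_def)
    then have "of_int (int n * z0) \<le> f (real (Suc 0) / real n) * real (n choose Suc 0)"
      using z0 npos by (simp add: mult.commute mult_left_mono)
    then have "of_int (int n * z0) \<le> c (Suc 0)" unfolding c_def by (rule round_ge[OF r])
    then have "f 0 \<le> a (Suc 0)" using z0 npos by (simp add: a_def field_simps)
    then show ?thesis using True a0 by simp
  next
    case False
    show ?thesis
    proof (cases "Suc k = n")
      case True
      have kn: "real k = real n - 1" using True by linarith
      have kk: "real k / real n = 1 - 1 / real n" unfolding kn using npos by (simp add: diff_divide_distrib)
      have nck: "n choose k = n" using True binomial_Suc_n by metis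
      have "1/real n \<le> 1" using n by simp
      then have "f (1 - 1/real n) \<le> f 1" using m2 npos by (auto simp: mono_on_def)
      then have "f (real k / real n) * real (n choose k) \<le> of_int (int n * z1)"
        using z1 npos True kk by (simp add: mult.commute mult_left_mono del: binomial_Suc_n) (metis True binomial_Suc_n mult.commute mult_right_mono of_nat_0_le_iff)
      then have "c k \<le> of_int (int n * z1)" unfolding c_def by (rule round_le[OF r])
      then have "a k \<le> f 1" using z1 npos nck by (simp add: a_def field_simps)
      then show ?thesis using True an by simp
    next
      case False2: False
      have n3: "n \<ge> 3" using k False False2 by linarith
      have kr: "k \<in> {1..n-2}" using k False False2 by auto
      note ph = phi[OF n3, rule_format, OF kr]
      have k1: "1 \<le> real k" and k2: "real k + 2 \<le> real n" using kr n3 by auto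
      have in1: "real k / real n \<in> {1/real n..1 - 1/real n}"
        using divint[OF npos, of "real k"] k1 k2 by simp
      have in2: "real (k+1) / real n \<in> {1/real n..1 - 1/real n}"
        using divint[OF npos, of "real (k+1)"] k1 k2 by simp
      have le: "real k / real n \<le> real (k+1) / real n" using npos by (simp add: divide_right_mono)
      have "f (real k / real n) - \<phi> (real k / real n) \<le> f (real (k+1) / real n) - \<phi> (real (k+1) / real n)"
        using m3[OF n3] in1 in2 le by (auto simp: mono_on_def)
      moreover have "\<bar>a k - f (real k / real n)\<bar> \<le> 1/2 * (1 / real (n choose k))" using k by (intro bnd) simp
      moreover have "\<bar>a (k+1) - f (real (k+1) / real n)\<bar> \<le> 1/2 * (1 / real (n choose (k+1)))" using k by (intro bnd) simp
      ultimately show ?thesis using ph by simp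
    qed
  qed
  show ?thesis unfolding eq by (rule BB_mono) (rule step)
qed

theorem proposition2p9:
  fixes f \<phi> :: "real \<Rightarrow> real" and n :: nat and r :: "real \<Rightarrow> int"
  assumes r: "nearest_int_rounding r"
    and f0: "f 0 \<in> \<int>" and f1: "f 1 \<in> \<int>"
    and n: "n \<ge> 1"
    and phi: "n \<ge> 3 \<Longrightarrow> \<forall>k\<in>{1..n-2}.
       \<phi> (real (k+1) / real n) - \<phi> (real k / real n)
         \<ge> 1/2 * (1 / real (n choose k) + 1 / real (n choose (k+1)))"
  shows "(mono_on {0..1/real n} f \<and> mono_on {1 - 1/real n..1} f \<and>
           (n \<ge> 3 \<longrightarrow> mono_on {1/real n..1 - 1/real n} (\<lambda>x. f x - \<phi> x))
          \<longrightarrow> mono_on {0..1} (Bhat r n f))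
       \<and> (antimono_on {0..1/real n} f \<and> antimono_on {1 - 1/real n..1} f \<and>
           (n \<ge> 3 \<longrightarrow> antimono_on {1/real n..1 - 1/real n} (\<lambda>x. f x + \<phi> x))
          \<longrightarrow> antimono_on {0..1} (Bhat r n f))"
proof (intro conjI impI)
  assume h: "mono_on {0..1/real n} f \<and> mono_on {1 - 1/real n..1} f \<and>
           (n \<ge> 3 \<longrightarrow> mono_on {1/real n..1 - 1/real n} (\<lambda>x. f x - \<phi> x))"
  show "mono_on {0..1} (Bhat r n f)"
    using h by (intro partA[OF r f0 f1 n phi]) auto
next
  assume h: "antimono_on {0..1/real n} f \<and> antimono_on {1 - 1/real n..1} f \<and>
           (n \<ge> 3 \<longrightarrow> antimono_on {1/real n..1 - 1/real n} (\<lambda>x. f x + \<phi> x))"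
  define r' where "r' = (\<lambda>\<alpha>. - r (- \<alpha>))"
  have r': "nearest_int_rounding r'"
    unfolding nearest_int_rounding_def r'_def
  proof
    fix \<alpha> :: real
    have "\<bar>real_of_int (r (- \<alpha>)) - (- \<alpha>)\<bar> \<le> 1/2" using r unfolding nearest_int_rounding_def by blast
    then show "\<bar>real_of_int (- r (- \<alpha>)) - \<alpha>\<bar> \<le> 1/2" by linarith
  qed
  have nf0: "(\<lambda>x. - f x) 0 \<in> \<int>" "(\<lambda>x. - f x) 1 \<in> \<int>" using f0 f1 by auto
  have "mono_on {0..1} (Bhat r' n (\<lambda>x. - f x))"
  proof (rule partA[OF r' nf0 n phi])
    show "mono_on {0..1/real n} (\<lambda>x. - f x)" using h by (auto simp: monotone_on_def)
    show "mono_on {1 - 1/real n..1} (\<lambda>x. - f x)" using h by (auto simp: monotone_on_def)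
    show "mono_on {1/real n..1 - 1/real n} (\<lambda>x. - f x - \<phi> x)" if "n \<ge> 3"
    proof (rule mono_onI)
      fix x y assume "x \<in> {1/real n..1 - 1/real n}" "y \<in> {1/real n..1 - 1/real n}" "x \<le> y"
      moreover have "antimono_on {1/real n..1 - 1/real n} (\<lambda>x. f x + \<phi> x)" using h that by blast
      ultimately have "f y + \<phi> y \<le> f x + \<phi> x" by (auto simp: monotone_on_def)
      then show "- f x - \<phi> x \<le> - f y - \<phi> y" by linarith
    qed
  qed auto
  moreover have eqn: "Bhat r' n (\<lambda>x. - f x) x = - Bhat r n f x" for x :: real
    unfolding Bhat_def r'_def sum_negf[symmetric] by (rule sum.cong) simp_all
  ultimately show "antimono_on {0..1} (Bhat r n f)"
  proof -
    assume m: "mono_on {0..1} (Bhat r' n (\<lambda>x. - f x))"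
    show ?thesis
    proof (rule monotone_onI)
      fix x y :: real assume xy: "x \<in> {0..1}" "y \<in> {0..1}" "x \<le> y"
      have "Bhat r' n (\<lambda>x. - f x) x \<le> Bhat r' n (\<lambda>x. - f x) y" using m xy by (rule mono_onD)
      then show "Bhat r n f y \<le> Bhat r n f x" unfolding eqn by simp
    qed
  qed
qed

end
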